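(* Let $P$ be a finite set of points in $\mathbb{R}^2$ with transmission radii $r(p)>0$, and let $t\in\mathbb{R}^2$. Let $\Gamma_1(t),\ldots,\Gamma_6(t)$ be the six canonical cones of $t$. For $i=1,\ldots,6$, let $Q_i(t)$ be the set of points $p\in P$ with $|pt|\le r(p)$ that are assigned to $\Gamma_i(t)$ (each such point lies in some cone; a point on a boundary between cones is assigned to one of them arbitrarily), and if $Q_i(t)\ne\emptyset$ let $q_i(t)$ be a point of $Q_i(t)$ of minimum transmission radius. Let $Q(t)$ be the set of (at most six) points $q_i(t)$ so obtained. Let $s\in P$ be a point that can reach $t$, and let $d^*(s,t):=\min_{q\in Q(t)}d_{\mathrm{hop}}(s,q)+1$. Then $d_{\mathrm{hop}}(s,t)\le d^*(s,t)\le d_{\mathrm{hop}}(s,t)+1$.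
   Context: The transmission graph $\mathcal{G}_{\mathrm{tr}}(P)$ is the directed graph on $P$ with arc $(p,q)$ iff $|pq|\le r(p)$. For $p,q\in P$, $d_{\mathrm{hop}}(p,q)$ is the minimum number of arcs on a directed path from $p$ to $q$ in $\mathcal{G}_{\mathrm{tr}}(P)$ ($0$ if $p=q$, $\infty$ if no path exists). For $s\in P$ and $t\in\mathbb{R}^2$, $d_{\mathrm{hop}}(s,t):=\min\{d_{\mathrm{hop}}(s,q)+1 : q\in P,\ |qt|\le r(q)\}$, and $s$ can reach $t$ if this is finite. The canonical cones of a point $x$ are the six closed $60$-degree cones with apex $x$ obtained by partitioning the plane around $x$ with a fixed orientation (the same six directions for every apex). *)

theory Defs
  imports Complex_Main "HOL-Library.Extended_Nat"
begin

definition tr_arcs :: "complex set \<Rightarrow> (complex \<Rightarrow> real) \<Rightarrow> (complex \<times> complex) set" where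
  "tr_arcs P r = {(p, q). p \<in> P \<and> q \<in> P \<and> dist p q \<le> r p}"

text \<open>Minimum number of arcs on a directed path (infinity if none; 0 if p = q).\<close>
definition dhop :: "complex set \<Rightarrow> (complex \<Rightarrow> real) \<Rightarrow> complex \<Rightarrow> complex \<Rightarrow> enat" where
  "dhop P r p q = (INF n \<in> {n. (p, q) \<in> tr_arcs P r ^^ n}. enat n)"

definition dhop_pt :: "complex set \<Rightarrow> (complex \<Rightarrow> real) \<Rightarrow> complex \<Rightarrow> complex \<Rightarrow> enat" where
  "dhop_pt P r s t = (INF q \<in> {q \<in> P. dist q t \<le> r q}. dhop P r s q + 1)"

text \<open>Canonical cone i (i = 0..5) with apex x: closed cone between directions
  i*pi/3 and (i+1)*pi/3.\<close>
definition canon_cone :: "complex \<Rightarrow> nat \<Rightarrow> complex set" where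
  "canon_cone x i = {x + complex_of_real \<rho> * cis \<theta> | \<rho> \<theta>.
      0 \<le> \<rho> \<and> real i * pi / 3 \<le> \<theta> \<and> \<theta> \<le> real (Suc i) * pi / 3}"

end

theory Submission
  imports Defs
begin

lemma enat_Inf_in: "(S::enat set) \<noteq> {} \<Longrightarrow> Inf S \<in> S"
  unfolding Inf_enat_def by (auto intro: LeastI)

lemma sq_max_aux:
  fixes a b :: real assumes ha: "0 \<le> a" and hb: "0 \<le> b"
  shows "a^2 + b^2 - a*b \<le> (max a b)^2"
  proof (cases "a \<le> b")
    case True
    have "a*a \<le> a*b" using True ha by (rule mult_left_mono)
    then show ?thesis using True by (simp add: power2_eq_square max_def)
  next
    case False
    have "b*b \<le> a*b" using False hb by (simp add: mult_right_mono)
    then show ?thesis using False by (simp add: power2_eq_square max_def)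
  qed

lemma cone_dist:
  assumes "p \<in> canon_cone t i" "x \<in> canon_cone t i"
  shows "dist p x \<le> max (dist p t) (dist x t)"
proof -
  obtain a u where pa: "p = t + complex_of_real a * cis u" "0 \<le> a"
    "real i * pi / 3 \<le> u" "u \<le> real (Suc i) * pi / 3"
    using assms(1) unfolding canon_cone_def by blast
  obtain b v where xb: "x = t + complex_of_real b * cis v" "0 \<le> b"
    "real i * pi / 3 \<le> v" "v \<le> real (Suc i) * pi / 3"
    using assms(2) unfolding canon_cone_def by blast
  have e: "real (Suc i) * pi / 3 = real i * pi / 3 + pi / 3" by (simp add: field_simps)
  have d: "\<bar>u - v\<bar> \<le> pi / 3" using pa(3,4) xb(3,4) unfolding e by linarith
  have c: "cos (pi/3) \<le> cos \<bar>u - v\<bar>"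
  proof -
    have "\<bar>u - v\<bar> \<le> pi" using d pi_gt_zero by linarith
    have "0 \<le> pi/3" "pi/3 \<le> pi" using pi_gt_zero by auto
    from cos_mono_le_eq[OF this abs_ge_zero \<open>\<bar>u - v\<bar> \<le> pi\<close>] show ?thesis using d by blast
  qed
  hence c2: "1/2 \<le> cos (u - v)" by (simp add: cos_60)
  have dp: "dist p t = a" using pa by (simp add: dist_norm norm_mult)
  have dx: "dist x t = b" using xb by (simp add: dist_norm norm_mult)
  have "(dist p x)^2 = (a * cos u - b * cos v)^2 + (a * sin u - b * sin v)^2"
    using pa xb by (simp add: dist_norm cmod_power2 cis.sel)
  also have "\<dots> = a^2 * ((cos u)^2 + (sin u)^2) + b^2 * ((cos v)^2 + (sin v)^2)
        - 2*a*b*(cos u * cos v + sin u * sin v)"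
    by (simp only: power2_diff power_mult_distrib distrib_left) (simp only: algebra_simps)
  also have "\<dots> = a^2 + b^2 - 2*a*b*cos (u - v)" by (simp only: sin_cos_squared_add2 mult_1_right cos_diff)
  also have "\<dots> \<le> a^2 + b^2 - a*b"
    using c2 pa(2) xb(2) mult_left_mono[OF c2, of "2*a*b"] by simp
  also have "\<dots> \<le> (max a b)^2"
    using pa(2) xb(2) by (rule sq_max_aux)
  finally have "(dist p x)^2 \<le> (max a b)^2" .
  hence "dist p x \<le> max a b"
    by (rule power2_le_imp_le) (use pa(2) in simp)
  thus ?thesis using dp dx by simp
qed

theorem mainTheorem6:
  fixes P :: "complex set" and r :: "complex \<Rightarrow> real" and t s :: complex
    and a :: "complex \<Rightarrow> nat" and q :: "nat \<Rightarrow> complex"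
  assumes "finite P"
    and "\<forall>p\<in>P. r p > 0"
    and "\<forall>p\<in>P. dist p t \<le> r p \<longrightarrow> a p < 6 \<and> p \<in> canon_cone t (a p)"
    and "\<forall>i<6. {p \<in> P. dist p t \<le> r p \<and> a p = i} \<noteq> {} \<longrightarrow>
           q i \<in> {p \<in> P. dist p t \<le> r p \<and> a p = i} \<and>
           (\<forall>p \<in> {p \<in> P. dist p t \<le> r p \<and> a p = i}. r (q i) \<le> r p)"
    and "s \<in> P"
    and "dhop_pt P r s t \<noteq> \<infinity>"
  shows "dhop_pt P r s t \<le> (INF x \<in> {q i | i. i < 6 \<and> {p \<in> P. dist p t \<le> r p \<and> a p = i} \<noteq> {}}. dhop P r s x + 1)
       \<and> (INF x \<in> {q i | i. i < 6 \<and> {p \<in> P. dist p t \<le> r p \<and> a p = i} \<noteq> {}}. dhop P r s x + 1) \<le> dhop_pt P r s t + 1"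
proof
  let ?Q = "{q i | i. i < 6 \<and> {p \<in> P. dist p t \<le> r p \<and> a p = i} \<noteq> {}}"
  let ?S = "{q \<in> P. dist q t \<le> r q}"
  have sub: "?Q \<subseteq> ?S" using assms(4) by blast
  show "dhop_pt P r s t \<le> (INF x \<in> ?Q. dhop P r s x + 1)"
    unfolding dhop_pt_def by (rule INF_superset_mono[OF sub]) simp
  have "?S \<noteq> {}"
  proof
    assume "?S = {}"
    hence "dhop_pt P r s t = \<infinity>" unfolding dhop_pt_def \<open>?S = {}\<close> by (simp add: top_enat_def)
    thus False using assms(6) by simp
  qed
  hence ne: "(\<lambda>x. dhop P r s x + 1) ` ?S \<noteq> {}" by blast
  from enat_Inf_in[OF ne] obtain q' where q': "q' \<in> ?S"
    and eq: "dhop_pt P r s t = dhop P r s q' + 1" unfolding dhop_pt_def by auto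
  have "dhop P r s q' \<noteq> \<infinity>" using eq assms(6) by (cases "dhop P r s q'") auto
  have "{n. (s, q') \<in> tr_arcs P r ^^ n} \<noteq> {}"
  proof
    assume h: "{n. (s, q') \<in> tr_arcs P r ^^ n} = {}"
    have "dhop P r s q' = \<infinity>" unfolding dhop_def h by (simp add: top_enat_def)
    thus False using \<open>dhop P r s q' \<noteq> \<infinity>\<close> by simp
  qed
  hence ne2: "(\<lambda>n. enat n) ` {n. (s, q') \<in> tr_arcs P r ^^ n} \<noteq> {}" by blast
  from enat_Inf_in[OF ne2] obtain k where k: "(s, q') \<in> tr_arcs P r ^^ k"
    and dk: "dhop P r s q' = enat k" unfolding dhop_def by auto
  define i where "i = a q'"
  have i6: "i < 6" and cq': "q' \<in> canon_cone t i" using assms(3) q' i_def by auto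
  have nei: "{p \<in> P. dist p t \<le> r p \<and> a p = i} \<noteq> {}" using q' i_def by auto
  have qi: "q i \<in> P" "dist (q i) t \<le> r (q i)" "a (q i) = i" "r (q i) \<le> r q'"
    using assms(4) i6 nei q' i_def by auto
  have cqi: "q i \<in> canon_cone t i" using assms(3) qi by metis
  have "dist q' (q i) \<le> max (dist q' t) (dist (q i) t)" by (rule cone_dist[OF cq' cqi])
  also have "\<dots> \<le> r q'" using q' qi by auto
  finally have "(q', q i) \<in> tr_arcs P r" using q' qi unfolding tr_arcs_def by auto
  hence "(s, q i) \<in> tr_arcs P r ^^ Suc k" using k by (rule relpow_Suc_I[rotated])
  hence "dhop P r s (q i) \<le> enat (Suc k)" unfolding dhop_def by (intro Inf_lower) (simp add: image_iff)
  moreover have "q i \<in> ?Q" using i6 nei by blast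
  ultimately have "(INF x \<in> ?Q. dhop P r s x + 1) \<le> enat (Suc k) + 1"
    by (meson INF_lower2 add_right_mono)
  also have "\<dots> = dhop_pt P r s t + 1" using eq dk by (simp add: eSuc_enat[symmetric] plus_1_eSuc)
  finally show "(INF x \<in> ?Q. dhop P r s x + 1) \<le> dhop_pt P r s t + 1" .
qed

end
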